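(* Fix integers $m\ge3$ and $n\ge2$. The cycle $C_m$ and the path $P_n$ are strongly disjoint if and only if $m$ is odd and $\gcd(m,n-1)=1$.
   Context: A weight function on finite $U$ is $\alpha:U\times U\to\mathbb{R}$, $\alpha\ge0$, symmetric, summing to $1$; degree $p(u)=\sum_{u'}\alpha(u,u')$; a graph is $(U,\alpha)$. $C_k$ ($k\ge3$) is the cycle on vertices $u_1,\dots,u_k$ with $\alpha(u_i,u_{i\pm1})=1/(2k)$ (indices mod $k$) and all other weights $0$. $P_k$ ($k\ge2$) is the path on $u_1,\dots,u_k$ with $\alpha(u_i,u_{i+1})=\alpha(u_{i+1},u_i)=1/(2(k-1))$ and all other weights $0$. For graphs $(U,\alpha)$, $(V,\beta)$ with degrees $p,q$, a weight joining is a weight function $\gamma$ on $U\times V$ with degree $r(u,v)=\sum_{(u',v')}\gamma((u,v),(u',v'))$ such that $\sum_v r(u,v)=p(u)$, $\sum_u r(u,v)=q(v)$, $p(u)\sum_{\tilde v}\gamma((u,v),(u',\tilde v))=\alpha(u,u')r(u,v)$ and $q(v)\sum_{\tilde u}\gamma((u,v),(\tilde u,v'))=\beta(v,v')r(u,v)$ for all $u,u',v,v'$. The graphs are strongly disjoint if the only weight joining is $\alpha\otimes\beta$, $(\alpha\otimes\beta)((u,v),(u',v'))=\alpha(u,u')\beta(v,v')$. *)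

theory Defs
  imports Complex_Main
begin

definition weight_fun :: "'a set \<Rightarrow> ('a \<Rightarrow> 'a \<Rightarrow> real) \<Rightarrow> bool" where
  "weight_fun U \<alpha> \<longleftrightarrow> finite U \<and>
     (\<forall>u\<in>U. \<forall>u'\<in>U. \<alpha> u u' \<ge> 0 \<and> \<alpha> u u' = \<alpha> u' u) \<and>
     (\<Sum>u\<in>U. \<Sum>u'\<in>U. \<alpha> u u') = 1"

definition wdeg :: "'a set \<Rightarrow> ('a \<Rightarrow> 'a \<Rightarrow> real) \<Rightarrow> 'a \<Rightarrow> real" where
  "wdeg U \<alpha> u = (\<Sum>u'\<in>U. \<alpha> u u')"

definition weight_joining ::
  "'a set \<Rightarrow> ('a \<Rightarrow> 'a \<Rightarrow> real) \<Rightarrow> 'b set \<Rightarrow> ('b \<Rightarrow> 'b \<Rightarrow> real)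
    \<Rightarrow> ('a \<times> 'b \<Rightarrow> 'a \<times> 'b \<Rightarrow> real) \<Rightarrow> bool" where
  "weight_joining U \<alpha> V \<beta> \<gamma> \<longleftrightarrow>
     weight_fun (U \<times> V) \<gamma> \<and>
     (\<forall>u\<in>U. (\<Sum>v\<in>V. wdeg (U \<times> V) \<gamma> (u, v)) = wdeg U \<alpha> u) \<and>
     (\<forall>v\<in>V. (\<Sum>u\<in>U. wdeg (U \<times> V) \<gamma> (u, v)) = wdeg V \<beta> v) \<and>
     (\<forall>u\<in>U. \<forall>u'\<in>U. \<forall>v\<in>V.
        wdeg U \<alpha> u * (\<Sum>v'\<in>V. \<gamma> (u, v) (u', v')) = \<alpha> u u' * wdeg (U \<times> V) \<gamma> (u, v)) \<and>
     (\<forall>v\<in>V. \<forall>v'\<in>V. \<forall>u\<in>U.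
        wdeg V \<beta> v * (\<Sum>u'\<in>U. \<gamma> (u, v) (u', v')) = \<beta> v v' * wdeg (U \<times> V) \<gamma> (u, v))"

definition strongly_disjoint ::
  "'a set \<Rightarrow> ('a \<Rightarrow> 'a \<Rightarrow> real) \<Rightarrow> 'b set \<Rightarrow> ('b \<Rightarrow> 'b \<Rightarrow> real) \<Rightarrow> bool" where
  "strongly_disjoint U \<alpha> V \<beta> \<longleftrightarrow>
     (\<forall>\<gamma>. weight_joining U \<alpha> V \<beta> \<gamma> \<longrightarrow>
        (\<forall>x\<in>U \<times> V. \<forall>y\<in>U \<times> V. \<gamma> x y = \<alpha> (fst x) (fst y) * \<beta> (snd x) (snd y)))"

text \<open>Cycle C_k on vertices 0..k-1 (u_i \<mapsto> i-1), path P_k on vertices 0..k-1.\<close>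
definition cycle_w :: "nat \<Rightarrow> nat \<Rightarrow> nat \<Rightarrow> real" where
  "cycle_w k i j = (if j = (i + 1) mod k \<or> i = (j + 1) mod k then 1 / (2 * real k) else 0)"

definition path_w :: "nat \<Rightarrow> nat \<Rightarrow> nat \<Rightarrow> real" where
  "path_w k i j = (if j = i + 1 \<or> i = j + 1 then 1 / (2 * (real k - 1)) else 0)"

end

theory Submission imports Defs begin

definition cm :: "nat \<Rightarrow> int \<Rightarrow> nat" where
  "cm m x = nat (x mod int m)"

lemma cm_int: "u < m \<Longrightarrow> cm m (int u) = u"
  by (simp add: cm_def)

lemma cm_lt: "m > 0 \<Longrightarrow> cm m x < m"
  unfolding cm_def by (simp add: nat_less_iff)

lemma int_cm: "m > 0 \<Longrightarrow> int (cm m x) = x mod int m"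
  unfolding cm_def by simp

lemma cm_mod: "cm m (x mod int m + y) = cm m (x + y)"
  unfolding cm_def by (simp add: mod_add_left_eq)

lemma cm_plus1: assumes "u < m" shows "cm m (int u + 1) = (if u + 1 = m then 0 else u + 1)"
proof (cases "u + 1 = m")
  case True
  then have "int u + 1 = int m" by simp
  then have "(int u + 1) mod int m = 0" by simp
  then show ?thesis using True by (simp add: cm_def)
next
  case False
  then have "int u + 1 < int m" using assms by simp
  then show ?thesis using False by (simp add: cm_def)
qed

lemma cm_minus1: assumes "u < m" shows "cm m (int u - 1) = (if u = 0 then m - 1 else u - 1)"
proof (cases "u = 0")
  case True
  then show ?thesis using assms by (simp add: cm_def zmod_minus1 of_nat_diff)
next
  case False
  then have "int u - 1 = int (u - 1)" by simp
  then show ?thesis using False assms by (simp add: cm_def)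
qed

context
  fixes m :: nat
  assumes m3: "m \<ge> 3"
begin

lemma cm_pm_ne: "u < m \<Longrightarrow> cm m (int u + 1) \<noteq> cm m (int u - 1)"
  using m3 by (auto simp: cm_plus1 cm_minus1)

lemma cycle_w_nz: "u < m \<Longrightarrow> u' < m \<Longrightarrow>
   cycle_w m u u' \<noteq> 0 \<longleftrightarrow> u' = cm m (int u + 1) \<or> u' = cm m (int u - 1)"
  using m3 by (auto simp: cycle_w_def cm_plus1 cm_minus1 mod_Suc split: if_splits)

lemma cycle_w_val: "u < m \<Longrightarrow> u' < m \<Longrightarrow>
   cycle_w m u u' = (if u' = cm m (int u + 1) \<or> u' = cm m (int u - 1) then 1 / (2 * real m) else 0)"
  using m3 by (auto simp: cycle_w_def cm_plus1 cm_minus1 mod_Suc split: if_splits)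

lemma sum_cyc_support:
  assumes u: "u < m" and F: "\<And>u'. u' < m \<Longrightarrow> F u' \<noteq> 0 \<Longrightarrow> u' = cm m (int u + 1) \<or> u' = cm m (int u - 1)"
  shows "(\<Sum>u'\<in>{0..<m}. F u') = F (cm m (int u + 1)) + F (cm m (int u - 1))"
proof -
  have m0: "m > 0" using m3 by simp
  have "(\<Sum>u'\<in>{0..<m}. F u') = (\<Sum>u'\<in>{cm m (int u + 1), cm m (int u - 1)}. F u')"
    apply (rule sum.mono_neutral_right)
    using cm_lt[OF m0] F by fastforce+
  also have "\<dots> = F (cm m (int u + 1)) + F (cm m (int u - 1))"
    using cm_pm_ne[OF u] by simp
  finally show ?thesis .
qed

lemma cyc_sum: "u < m \<Longrightarrow> (\<Sum>u'\<in>{0..<m}. cycle_w m u u' * F u') =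
   (F (cm m (int u + 1)) + F (cm m (int u - 1))) / (2 * real m)"
  apply (subst sum_cyc_support[of u])
  using m3 cm_lt[of m] by (auto simp: cycle_w_val add_divide_distrib split: if_splits)

lemma cyc_deg: "u < m \<Longrightarrow> wdeg {0..<m} (cycle_w m) u = 1 / real m"
  using cyc_sum[of u "\<lambda>_. 1"] by (simp add: wdeg_def)

end

lemma sum_path_support:
  fixes v n :: nat and G :: "nat \<Rightarrow> real"
  assumes v: "v < n" and G: "\<And>v'. v' < n \<Longrightarrow> G v' \<noteq> 0 \<Longrightarrow> v' = v + 1 \<or> (0 < v \<and> v' = v - 1)"
  shows "(\<Sum>v'\<in>{0..<n}. G v') = (if v + 1 < n then G (v + 1) else 0) + (if 0 < v then G (v - 1) else 0)"
proof -
  have "(\<Sum>v'\<in>{0..<n}. G v') = (\<Sum>v'\<in>{0..<n}. (if v' = v + 1 then G v' else 0) + (if v' = v - 1 then (if 0 < v then G v' else 0) else 0))"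
    apply (rule sum.cong, simp)
    subgoal for v'
    proof -
      assume "v' \<in> {0..<n}"
      moreover have "v + 1 \<noteq> v - 1" by arith
      ultimately show ?thesis using G[of v'] by (cases "v' = v + 1") auto
    qed
    done
  also have "\<dots> = (if v + 1 < n then G (v + 1) else 0) + (if 0 < v then G (v - 1) else 0)"
    using v by (simp add: sum.distrib) (use v in arith)
  finally show ?thesis .
qed

context
  fixes n :: nat
  assumes n2: "n \<ge> 2"
begin

lemma path_w_val: "v < n \<Longrightarrow> v' < n \<Longrightarrow>
   path_w n v v' = (if v' = v + 1 \<or> (0 < v \<and> v' = v - 1) then 1 / (2 * (real n - 1)) else 0)"
  by (auto simp: path_w_def)

lemma path_sum: "v < n \<Longrightarrow> (\<Sum>v'\<in>{0..<n}. path_w n v v' * G v') =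
   ((if v + 1 < n then G (v + 1) else 0) + (if 0 < v then G (v - 1) else 0)) / (2 * (real n - 1))"
  apply (subst sum_path_support[of v])
    apply (auto simp: path_w_val add_divide_distrib split: if_splits)
  done

lemma path_deg: "v < n \<Longrightarrow> wdeg {0..<n} (path_w n) v =
   ((if v + 1 < n then 1 else 0) + (if 0 < v then 1 else 0)) / (2 * (real n - 1))"
  using path_sum[of v "\<lambda>_. 1"] by (simp add: wdeg_def)

lemma path_deg_pos: "v < n \<Longrightarrow> wdeg {0..<n} (path_w n) v > 0"
  using n2 by (auto simp: path_deg intro!: divide_pos_pos)

end

lemma cm_cm_plus: "m > 0 \<Longrightarrow> cm m (int (cm m x) + y) = cm m (x + y)"
  by (simp add: int_cm cm_mod)

locale J =
  fixes m n :: nat and \<gamma> :: "nat \<times> nat \<Rightarrow> nat \<times> nat \<Rightarrow> real"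
  assumes m3: "m \<ge> 3" and n2: "n \<ge> 2"
    and J: "weight_joining {0..<m} (cycle_w m) {0..<n} (path_w n) \<gamma>"
begin

lemma m0: "m > 0" using m3 by simp

lemma nonneg: "u < m \<Longrightarrow> v < n \<Longrightarrow> u' < m \<Longrightarrow> v' < n \<Longrightarrow> \<gamma> (u, v) (u', v') \<ge> 0"
  using J unfolding weight_joining_def weight_fun_def by auto

lemma sym: "u < m \<Longrightarrow> v < n \<Longrightarrow> u' < m \<Longrightarrow> v' < n \<Longrightarrow> \<gamma> (u, v) (u', v') = \<gamma> (u', v') (u, v)"
  using J unfolding weight_joining_def weight_fun_def by auto

definition r where "r u v = wdeg ({0..<m} \<times> {0..<n}) \<gamma> (u, v)"

lemma r_eq: "r u v = (\<Sum>u'\<in>{0..<m}. \<Sum>v'\<in>{0..<n}. \<gamma> (u, v) (u', v'))"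
  unfolding r_def wdeg_def by (simp add: sum.cartesian_product)

lemma c4: "u < m \<Longrightarrow> u' < m \<Longrightarrow> v < n \<Longrightarrow>
   (1 / real m) * (\<Sum>v'\<in>{0..<n}. \<gamma> (u, v) (u', v')) = cycle_w m u u' * r u v"
  using J cyc_deg[OF m3] unfolding weight_joining_def r_def by auto

lemma c5: "v < n \<Longrightarrow> v' < n \<Longrightarrow> u < m \<Longrightarrow>
   wdeg {0..<n} (path_w n) v * (\<Sum>u'\<in>{0..<m}. \<gamma> (u, v) (u', v')) = path_w n v v' * r u v"
  using J unfolding weight_joining_def r_def by auto

lemma supp_u:
  assumes "u < m" "v < n" "u' < m" "v' < n" "\<gamma> (u, v) (u', v') \<noteq> 0"
  shows "u' = cm m (int u + 1) \<or> u' = cm m (int u - 1)"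
proof (rule ccontr)
  assume "\<not> ?thesis"
  then have "cycle_w m u u' = 0" using cycle_w_nz[OF m3 assms(1,3)] by auto
  then have "(\<Sum>v'\<in>{0..<n}. \<gamma> (u, v) (u', v')) = 0" using c4[OF assms(1,3,2)] m0 by simp
  then have "\<forall>v''\<in>{0..<n}. \<gamma> (u, v) (u', v'') = 0"
    by (subst (asm) sum_nonneg_eq_0_iff) (use nonneg assms in auto)
  then show False using assms by auto
qed

lemma supp_v:
  assumes "u < m" "v < n" "u' < m" "v' < n" "\<gamma> (u, v) (u', v') \<noteq> 0"
  shows "v' = v + 1 \<or> (0 < v \<and> v' = v - 1)"
proof (rule ccontr)
  assume "\<not> ?thesis"
  then have "path_w n v v' = 0" using path_w_val[OF n2 assms(2,4)] by auto
  then have "(\<Sum>u'\<in>{0..<m}. \<gamma> (u, v) (u', v')) = 0" using c5[OF assms(2,4,1)] path_deg_pos[OF n2 assms(2)] by simp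
  then have "\<forall>u''\<in>{0..<m}. \<gamma> (u, v) (u'', v') = 0"
    by (subst (asm) sum_nonneg_eq_0_iff) (use nonneg assms in auto)
  then show False using assms by auto
qed


lemma S_eq: "u < m \<Longrightarrow> v < n \<Longrightarrow> u' < m \<Longrightarrow> (\<Sum>v'\<in>{0..<n}. \<gamma> (u, v) (u', v')) =
   (if v + 1 < n then \<gamma> (u, v) (u', v + 1) else 0) + (if 0 < v then \<gamma> (u, v) (u', v - 1) else 0)"
  by (rule sum_path_support) (use supp_v in auto)

lemma T_eq: "u < m \<Longrightarrow> v < n \<Longrightarrow> v' < n \<Longrightarrow> (\<Sum>u'\<in>{0..<m}. \<gamma> (u, v) (u', v')) =
   \<gamma> (u, v) (cm m (int u + 1), v') + \<gamma> (u, v) (cm m (int u - 1), v')"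
  by (rule sum_cyc_support[OF m3]) (use supp_u in auto)

lemma r_eq2: assumes "u < m" "v < n"
  shows "r u v = (\<Sum>v'\<in>{0..<n}. \<gamma> (u, v) (cm m (int u + 1), v')) + (\<Sum>v'\<in>{0..<n}. \<gamma> (u, v) (cm m (int u - 1), v'))"
  unfolding r_eq
proof (rule sum_cyc_support[OF m3 assms(1)])
  fix u' assume "u' < m" "(\<Sum>v'\<in>{0..<n}. \<gamma> (u, v) (u', v')) \<noteq> 0"
  then obtain v' where "v' < n" "\<gamma> (u, v) (u', v') \<noteq> 0"
    by (metis atLeastLessThan_iff sum.neutral)
  then show "u' = cm m (int u + 1) \<or> u' = cm m (int u - 1)" using supp_u assms \<open>u' < m\<close> by blast
qed

lemma local_rel:
  assumes u: "u < m" and v: "v < n"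
  defines "P \<equiv> cm m (int u + 1)" and "M \<equiv> cm m (int u - 1)"
  shows "(v + 1 < n \<and> 0 < v \<longrightarrow> \<gamma> (u, v) (P, v + 1) = \<gamma> (u, v) (M, v - 1) \<and> \<gamma> (u, v) (P, v - 1) = \<gamma> (u, v) (M, v + 1))
    \<and> (v = 0 \<longrightarrow> \<gamma> (u, v) (P, v + 1) = \<gamma> (u, v) (M, v + 1))
    \<and> (v + 1 = n \<longrightarrow> \<gamma> (u, v) (P, v - 1) = \<gamma> (u, v) (M, v - 1))"
proof -
  have P: "P < m" and M: "M < m" unfolding P_def M_def using cm_lt m0 by auto
  have PM: "P \<noteq> M" unfolding P_def M_def using cm_pm_ne[OF m3 u] .
  have aP: "cycle_w m u P = 1 / (2 * real m)" using cycle_w_val[OF m3 u P] unfolding P_def by simp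
  define e1 where "e1 = \<gamma> (u, v) (P, v + 1)"
  define e2 where "e2 = \<gamma> (u, v) (P, v - 1)"
  define e3 where "e3 = \<gamma> (u, v) (M, v + 1)"
  define e4 where "e4 = \<gamma> (u, v) (M, v - 1)"
  define a where "a = (if v + 1 < n then 1 else 0 :: real)"
  define b where "b = (if 0 < v then 1 else 0 :: real)"
  have SP: "(\<Sum>v'\<in>{0..<n}. \<gamma> (u, v) (P, v')) = a * e1 + b * e2"
    using S_eq[OF u v P] unfolding a_def b_def e1_def e2_def by simp
  have SM: "(\<Sum>v'\<in>{0..<n}. \<gamma> (u, v) (M, v')) = a * e3 + b * e4"
    using S_eq[OF u v M] unfolding a_def b_def e3_def e4_def by simp
  have rr: "r u v = a * e1 + b * e2 + a * e3 + b * e4"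
    using r_eq2[OF u v] SP SM unfolding P_def M_def by simp
  have C4: "(1 / real m) * (a * e1 + b * e2) = 1 / (2 * real m) * r u v"
    using c4[OF u P v] SP aP by simp
  then have "real m * (2 * (a * e1 + b * e2)) = real m * r u v" using m0 by (simp add: field_simps)
  then have C4': "2 * (a * e1 + b * e2) = r u v" using m0 by simp
  have N: "real n - 1 > 0" using n2 by simp
  have q: "wdeg {0..<n} (path_w n) v = (a + b) / (2 * (real n - 1))"
    using path_deg[OF n2 v] unfolding a_def b_def by simp
  have C5a: "v + 1 < n \<Longrightarrow> (a + b) * (e1 + e3) = r u v"
  proof -
    assume h: "v + 1 < n"
    have "(a + b) / (2 * (real n - 1)) * (e1 + e3) = 1 / (2 * (real n - 1)) * r u v"
      using c5[OF v h u] T_eq[OF u v h] q path_w_val[OF n2 v h] unfolding e1_def e3_def P_def M_def by simp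
    then show ?thesis using N by (simp add: field_simps)
  qed
  have C5b: "0 < v \<Longrightarrow> (a + b) * (e2 + e4) = r u v"
  proof -
    assume h: "0 < v"
    have h': "v - 1 < n" using v by simp
    have "(a + b) / (2 * (real n - 1)) * (e2 + e4) = 1 / (2 * (real n - 1)) * r u v"
      using c5[OF v h' u] T_eq[OF u v h'] q path_w_val[OF n2 v h'] h unfolding e2_def e4_def P_def M_def by simp
    then show ?thesis using N by (simp add: field_simps)
  qed
  show ?thesis
  proof (intro conjI impI)
    assume h: "v + 1 < n \<and> 0 < v"
    then have ab: "a = 1" "b = 1" unfolding a_def b_def by auto
    have x1: "2 * (e1 + e3) = r u v" using C5a h ab by simp
    have x2: "2 * (e2 + e4) = r u v" using C5b h ab by simp
    have x3: "2 * (e1 + e2) = r u v" using C4' ab by simp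
    have x4: "r u v = e1 + e2 + e3 + e4" using rr ab by simp
    have "e1 = e4" using x1 x2 x3 x4 by argo
    moreover have "e2 = e3" using x1 x2 x3 x4 by argo
    ultimately show "\<gamma> (u, v) (P, v + 1) = \<gamma> (u, v) (M, v - 1)"
      "\<gamma> (u, v) (P, v - 1) = \<gamma> (u, v) (M, v + 1)"
      unfolding e1_def e2_def e3_def e4_def by simp_all
  next
    assume h: "v = 0"
    then have "a = 1" "b = 0" unfolding a_def b_def using n2 by auto
    then have "e1 = e3" using C4' rr by simp
    then show "\<gamma> (u, v) (P, v + 1) = \<gamma> (u, v) (M, v + 1)"
      unfolding e1_def e3_def by simp
  next
    assume h: "v + 1 = n"
    then have "a = 0" "b = 1" unfolding a_def b_def using n2 by auto
    then have "e2 = e4" using C4' rr by simp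
    then show "\<gamma> (u, v) (P, v - 1) = \<gamma> (u, v) (M, v - 1)"
      unfolding e2_def e4_def by simp
  qed
qed


definition A where "A x v = \<gamma> (cm m x, v) (cm m (x + 1), v + 1)"
definition B where "B x v = \<gamma> (cm m x, v) (cm m (x - 1), v + 1)"

lemma PM_cm: "cm m (int (cm m x) + 1) = cm m (x + 1)" "cm m (int (cm m x) - 1) = cm m (x - 1)"
  using cm_cm_plus[OF m0, of x 1] cm_cm_plus[OF m0, of x "-1"] by simp_all

lemma rels:
  fixes x :: int and v :: nat
  assumes v: "v < n"
  shows "0 < v \<Longrightarrow> v + 1 < n \<Longrightarrow> A x v = A (x - 1) (v - 1)"
    and "0 < v \<Longrightarrow> v + 1 < n \<Longrightarrow> B x v = B (x + 1) (v - 1)"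
    and "v = 0 \<Longrightarrow> A x v = B x v"
    and "v + 1 = n \<Longrightarrow> B (x + 1) (v - 1) = A (x - 1) (v - 1)"
proof -
  define u where "u = cm m x"
  have u: "u < m" unfolding u_def using cm_lt m0 by auto
  have P: "cm m (x + 1) < m" and M: "cm m (x - 1) < m" using cm_lt m0 by auto
  note L = local_rel[OF u v, unfolded u_def PM_cm, folded u_def]
  have vv: "0 < v \<Longrightarrow> v - 1 + 1 = v" by simp
  show "0 < v \<Longrightarrow> v + 1 < n \<Longrightarrow> A x v = A (x - 1) (v - 1)"
    using L sym[OF M _ u v] v unfolding A_def u_def by (simp add: vv)
  show "0 < v \<Longrightarrow> v + 1 < n \<Longrightarrow> B x v = B (x + 1) (v - 1)"
    using L sym[OF P _ u v] v unfolding B_def u_def by (simp add: vv)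
  show "v = 0 \<Longrightarrow> A x v = B x v"
    using L unfolding A_def B_def u_def by simp
  show "v + 1 = n \<Longrightarrow> B (x + 1) (v - 1) = A (x - 1) (v - 1)"
    using L sym[OF P _ u v] sym[OF M _ u v] v n2 unfolding A_def B_def u_def by (simp add: vv)
qed


lemma A_diag: "k + 1 < n \<Longrightarrow> A (x + int k) k = A x 0"
proof (induction k)
  case 0 then show ?case by simp
next
  case (Suc k)
  have "A (x + int (Suc k)) (Suc k) = A (x + int (Suc k) - 1) (Suc k - 1)"
    using rels(1)[of "Suc k" "x + int (Suc k)"] Suc.prems by simp
  also have "\<dots> = A (x + int k) k" by simp
  finally show ?case using Suc by simp
qed

lemma B_diag: "k + 1 < n \<Longrightarrow> B (x - int k) k = B x 0"
proof (induction k)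
  case 0 then show ?case by simp
next
  case (Suc k)
  have "B (x - int (Suc k)) (Suc k) = B (x - int (Suc k) + 1) (Suc k - 1)"
    using rels(2)[of "Suc k" "x - int (Suc k)"] Suc.prems by simp
  also have "\<dots> = B (x - int k) k" by simp
  finally show ?case using Suc by simp
qed

definition f where "f x = A x 0"

lemma A_f: "k + 1 < n \<Longrightarrow> A x k = f (x - int k)"
  using A_diag[of k "x - int k"] unfolding f_def by simp

lemma B_f: "k + 1 < n \<Longrightarrow> B x k = f (x + int k)"
  using B_diag[of k "x + int k"] rels(3)[of 0 "x + int k"] n2 unfolding f_def by simp

lemma f_per_m: "f (y + int m) = f y"
proof -
  have "(y + int m + 1) mod int m = (y + 1) mod int m" by (metis add.commute add.left_commute mod_add_self2)
  moreover have "(y + int m) mod int m = y mod int m" by simp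
  ultimately show ?thesis unfolding f_def A_def cm_def by simp
qed

lemma f_per_N: "f (y + 2 * (int n - 1)) = f y"
proof -
  define x where "x = y + (int n - 1)"
  define k where "k = n - 1 - 1"
  have h: "k + 1 < n" "n - 1 < n" "n - 1 - 1 = k" unfolding k_def using n2 by auto
  have kk: "int k = int n - 2" unfolding k_def using n2 by (simp add: of_nat_diff)
  have "f (y + 2 * (int n - 1)) = f (x + 1 + int k)" unfolding x_def kk by (simp add: algebra_simps)
  also have "\<dots> = B (x + 1) k" using B_f[OF h(1)] by simp
  also have "\<dots> = A (x - 1) k"
    using rels(4)[of "n - 1" x] h n2 by simp
  also have "\<dots> = f (x - 1 - int k)" using A_f[OF h(1)] by simp
  also have "\<dots> = f y" unfolding x_def kk by (simp add: algebra_simps)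
  finally show ?thesis .
qed

end

lemma per_mult_nat: "(\<And>y. g (y + p) = g y) \<Longrightarrow> g (y + int k * p) = g (y::int)"
  by (induction k arbitrary: y) (simp_all add: algebra_simps, metis add.assoc)

lemma per_mult: assumes "\<And>y. g (y + p) = g y" shows "g (y + k * p) = g (y::int)"
proof (cases "k \<ge> 0")
  case True
  then show ?thesis using per_mult_nat[of g p y "nat k"] assms by simp
next
  case False
  have "g (y + k * p + int (nat (- k)) * p) = g (y + k * p)" using per_mult_nat[of g p] assms by blast
  then show ?thesis using False by (simp add: algebra_simps)
qed

lemma per_const:
  fixes a b :: int
  assumes "\<And>y. g (y + a) = g y" "\<And>y. g (y + b) = g y" "gcd a b = 1"
  shows "g y = g 0"
proof -
  obtain s t where st: "s * a + t * b = 1" using bezout_int[of a b] assms(3) by auto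
  have one: "g (z + 1) = g z" for z
  proof -
    have "g (z + s * a + t * b) = g (z + s * a)" using per_mult[of g b] assms(2) by blast
    also have "\<dots> = g z" using per_mult[of g a] assms(1) by blast
    finally show ?thesis using st by (simp add: add.assoc)
  qed
  show ?thesis using per_mult[of g 1 0 y] one by simp
qed

context J
begin

lemma f_const:
  assumes cop: "coprime m (2 * (n - 1))"
  shows "f y = f 0"
proof (rule per_const[of f "int m" "2 * (int n - 1)"])
  show "f (y + int m) = f y" for y by (rule f_per_m)
  show "f (y + 2 * (int n - 1)) = f y" for y by (rule f_per_N)
  have e: "2 * (int n - 1) = int (2 * (n - 1))" using n2 by (simp add: of_nat_diff)
  have g: "gcd m (2 * (n - 1)) = 1" using cop by (metis coprime_iff_gcd_eq_1)
  show "gcd (int m) (2 * (int n - 1)) = 1"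
    unfolding e gcd_int_int_eq g by simp
qed

lemma gamma_val:
  assumes cop: "coprime m (2 * (n - 1))"
    and u: "u < m" and v: "v < n" and u': "u' < m" and v': "v' < n"
  shows "\<gamma> (u, v) (u', v') = (if (u' = cm m (int u + 1) \<or> u' = cm m (int u - 1)) \<and> (v' = v + 1 \<or> (0 < v \<and> v' = v - 1)) then f 0 else 0)"
proof (cases "(u' = cm m (int u + 1) \<or> u' = cm m (int u - 1)) \<and> (v' = v + 1 \<or> (0 < v \<and> v' = v - 1))")
  case False
  then show ?thesis using supp_u[OF u v u' v'] supp_v[OF u v u' v'] by auto
next
  case adj: True
  have cu: "cm m (int u) = u" using u by (simp add: cm_int)
  have P: "cm m (int u + 1) < m" and M: "cm m (int u - 1) < m" using cm_lt m0 by auto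
  note fc = f_const[OF cop]
  show ?thesis
  proof (cases "v' = v + 1")
    case vv: True
    then have h: "v + 1 < n" using v' by simp
    show ?thesis
    proof (cases "u' = cm m (int u + 1)")
      case uP: True
      have "\<gamma> (u, v) (u', v') = A (int u) v" unfolding A_def cu uP vv by simp
      also have "\<dots> = f 0" using A_f[OF h] fc[of "int u - int v"] by simp
      finally show ?thesis using adj by simp
    next
      case False
      then have uM: "u' = cm m (int u - 1)" using adj by auto
      have "\<gamma> (u, v) (u', v') = B (int u) v" unfolding B_def cu uM vv by simp
      also have "\<dots> = f 0" using B_f[OF h] fc[of "int u + int v"] by simp
      finally show ?thesis using adj by simp
    qed
  next
    case vv: False
    then have v0: "0 < v" and vv': "v' = v - 1" using adj by auto
    have h: "v - 1 + 1 < n" "v - 1 + 1 = v" using v v0 by auto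
    show ?thesis
    proof (cases "u' = cm m (int u + 1)")
      case uP: True
      have "\<gamma> (u, v) (u', v') = \<gamma> (u', v') (u, v)" using sym[OF u v u' v'] .
      also have "\<dots> = B (int u + 1) (v - 1)" unfolding B_def uP vv' h(2) by (simp add: cu)
      also have "\<dots> = f 0" using B_f[OF h(1)] fc[of "int u + 1 + int (v - 1)"] by simp
      finally show ?thesis using adj by simp
    next
      case False
      then have uM: "u' = cm m (int u - 1)" using adj by auto
      have "\<gamma> (u, v) (u', v') = \<gamma> (u', v') (u, v)" using sym[OF u v u' v'] .
      also have "\<dots> = A (int u - 1) (v - 1)" unfolding A_def uM vv' h(2) by (simp add: cu)
      also have "\<dots> = f 0" using A_f[OF h(1)] fc[of "int u - 1 - int (v - 1)"] by simp
      finally show ?thesis using adj by simp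
    qed
  qed
qed



lemma total: "(\<Sum>x\<in>{0..<m} \<times> {0..<n}. \<Sum>y\<in>{0..<m} \<times> {0..<n}. \<gamma> x y) = 1"
  using J unfolding weight_joining_def weight_fun_def by auto

lemma sum_q: "(\<Sum>v\<in>{0..<n}. wdeg {0..<n} (path_w n) v) = 1"
proof -
  have "(\<Sum>v\<in>{0..<n}. wdeg {0..<n} (path_w n) v) = (\<Sum>v\<in>{0..<n}. \<Sum>u\<in>{0..<m}. r u v)"
    using J unfolding weight_joining_def r_def by auto
  also have "\<dots> = (\<Sum>u\<in>{0..<m}. \<Sum>v\<in>{0..<n}. r u v)" by (rule sum.swap)
  also have "\<dots> = (\<Sum>x\<in>{0..<m} \<times> {0..<n}. wdeg ({0..<m} \<times> {0..<n}) \<gamma> x)"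
    unfolding r_def by (simp add: sum.cartesian_product)
  also have "\<dots> = 1" using total unfolding wdeg_def .
  finally show ?thesis .
qed

lemma sum_prod_one:
  "(\<Sum>x\<in>{0..<m} \<times> {0..<n}. \<Sum>y\<in>{0..<m} \<times> {0..<n}. cycle_w m (fst x) (fst y) * path_w n (snd x) (snd y)) = 1"
proof -
  have inner: "(\<Sum>y\<in>{0..<m} \<times> {0..<n}. cycle_w m u (fst y) * path_w n v (snd y))
      = wdeg {0..<m} (cycle_w m) u * wdeg {0..<n} (path_w n) v" for u v
    unfolding wdeg_def sum_product by (simp add: sum.cartesian_product split_beta)
  have "(\<Sum>x\<in>{0..<m} \<times> {0..<n}. \<Sum>y\<in>{0..<m} \<times> {0..<n}. cycle_w m (fst x) (fst y) * path_w n (snd x) (snd y))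
     = (\<Sum>u\<in>{0..<m}. \<Sum>v\<in>{0..<n}. wdeg {0..<m} (cycle_w m) u * wdeg {0..<n} (path_w n) v)"
    by (simp add: sum.cartesian_product split_beta inner)
  also have "\<dots> = (\<Sum>u\<in>{0..<m}. wdeg {0..<m} (cycle_w m) u) * (\<Sum>v\<in>{0..<n}. wdeg {0..<n} (path_w n) v)"
    by (simp add: sum_product)
  also have "\<dots> = 1" using sum_q cyc_deg[OF m3] m0 by simp
  finally show ?thesis .
qed

lemma uniq:
  assumes cop: "coprime m (2 * (n - 1))"
  shows "\<forall>x\<in>{0..<m} \<times> {0..<n}. \<forall>y\<in>{0..<m} \<times> {0..<n}. \<gamma> x y = cycle_w m (fst x) (fst y) * path_w n (snd x) (snd y)"
proof -
  define K where "K = f 0 * (4 * real m * (real n - 1))"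
  have N: "real n - 1 > 0" using n2 by simp
  have gK: "\<gamma> x y = K * (cycle_w m (fst x) (fst y) * path_w n (snd x) (snd y))"
    if "x \<in> {0..<m} \<times> {0..<n}" "y \<in> {0..<m} \<times> {0..<n}" for x y
  proof -
    obtain u v u' v' where xy: "x = (u, v)" "y = (u', v')" by fastforce
    have r: "u < m" "v < n" "u' < m" "v' < n" using that xy by auto
    show ?thesis
      unfolding xy using gamma_val[OF cop r] cycle_w_val[OF m3 r(1,3)] path_w_val[OF n2 r(2,4)] m0 N
      unfolding K_def by (auto simp: field_simps)
  qed
  have "1 = (\<Sum>x\<in>{0..<m} \<times> {0..<n}. \<Sum>y\<in>{0..<m} \<times> {0..<n}. \<gamma> x y)" using total by simp
  also have "\<dots> = (\<Sum>x\<in>{0..<m} \<times> {0..<n}. \<Sum>y\<in>{0..<m} \<times> {0..<n}. K * (cycle_w m (fst x) (fst y) * path_w n (snd x) (snd y)))"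
    using gK by (intro sum.cong refl) auto
  also have "\<dots> = K" using sum_prod_one by (simp add: sum_distrib_left[symmetric])
  finally have "K = 1" by simp
  then show ?thesis using gK by simp
qed

end

lemma tel_up: "(\<Sum>v<N. F (int v + c + 1) - F (int v + c)) = F (int N + c) - (F c :: real)"
  using sum_lessThan_telescope[of "\<lambda>v. F (int v + c)" N] by (simp add: add_ac)

lemma tel_down: "(\<Sum>v<N. F (c - int v) - F (c - int v - 1)) = F c - (F (c - int N) :: real)"
  using sum_lessThan_telescope'[of "\<lambda>v. F (c - int v)" N] by (simp add: algebra_simps)

lemma cm_plus2_ne: assumes "u < m" "m \<ge> 3" shows "cm m (int (cm m (int u + 1)) + 1) \<noteq> u"
proof -
  have w: "cm m (int u + 1) < m" using cm_lt assms by auto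
  show ?thesis using cm_plus1[OF w] cm_plus1[OF assms(1)] assms by (auto split: if_splits)
qed

lemma sum_prod_split: "(\<Sum>x\<in>A \<times> B. F x) = (\<Sum>u\<in>A. \<Sum>v\<in>B. F (u, v))"
  by (simp add: sum.cartesian_product)

locale C =
  fixes m n d :: nat
  assumes m3: "m \<ge> 3" and n2: "n \<ge> 2" and d2: "d \<ge> 2" and dm: "d dvd m" and dN: "d dvd 2 * (n - 1)"
begin

lemma m0: "m > 0" using m3 by simp

definition gg :: "int \<Rightarrow> real" where "gg x = (if x mod int d = 0 then 1 else 0)"
definition hh :: "int \<Rightarrow> real" where "hh x = gg (x + 1) - gg x"
definition ff :: "int \<Rightarrow> real" where "ff x = 1 + hh x / 2"

lemma gg_cm: "gg (int (cm m x) + y) = gg (x + y)"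
proof -
  have "int d dvd int m" using dm by simp
  then have "(x mod int m + y) mod int d = (x + y) mod int d"
    by (metis mod_add_left_eq mod_mod_cancel)
  then show ?thesis unfolding gg_def using int_cm[OF m0] by simp
qed

lemma ff_cm: "ff (int (cm m x) + y) = ff (x + y)"
  unfolding ff_def hh_def using gg_cm[of x y] gg_cm[of x "y + 1"] by (simp add: add.assoc)

lemma gg_perN: "gg (x + 2 * (int n - 1)) = gg x"
proof -
  have e: "int (2 * (n - 1)) = 2 * (int n - 1)" using n2 by (simp add: of_nat_diff)
  have "int d dvd int (2 * (n - 1))" using dN by (simp only: int_dvd_int_iff)
  then have "int d dvd 2 * (int n - 1)" unfolding e .
  then have "(x + 2 * (int n - 1)) mod int d = x mod int d"
    by (metis dvd_imp_mod_0 mod_add_right_eq add_0_right)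
  then show ?thesis unfolding gg_def by simp
qed

lemma gg_perm: "gg (x + int m) = gg x"
proof -
  have "int d dvd int m" using dm by simp
  then have "(x + int m) mod int d = x mod int d"
    by (metis dvd_imp_mod_0 mod_add_right_eq add_0_right)
  then show ?thesis unfolding gg_def by simp
qed

lemma ff_nonneg: "ff x \<ge> 0"
  unfolding ff_def hh_def gg_def by auto

lemma ff0: "ff 0 = 1 / 2"
proof -
  have "(1::int) mod int d \<noteq> 0" using d2 by simp
  then show ?thesis unfolding ff_def hh_def gg_def by simp
qed

lemma ff_perN: "ff (x + (int n - 1)) = ff (x - (int n - 1))"
proof -
  have "gg (x - (int n - 1) + 2 * (int n - 1)) = gg (x - (int n - 1))"
       "gg (x - (int n - 1) + 1 + 2 * (int n - 1)) = gg (x - (int n - 1) + 1)" using gg_perN by blast+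
  then show ?thesis unfolding ff_def hh_def by (simp add: algebra_simps)
qed

definition Phi :: "nat \<times> nat \<Rightarrow> nat \<times> nat \<Rightarrow> real" where
  "Phi x y = (let (u, v) = x; (u', v') = y in
     if v' = v + 1 then (if u' = cm m (int u + 1) then ff (int u - int v) else ff (int u + int v))
     else if v = v' + 1 then (if u = cm m (int u' + 1) then ff (int u' - int v') else ff (int u' + int v'))
     else 1)"

lemma Phi_sym: "Phi x y = Phi y x"
  unfolding Phi_def by (auto simp: split_beta)

lemma Phi_nonneg: "Phi x y \<ge> 0"
  unfolding Phi_def using ff_nonneg by (auto simp: split_beta)

lemma Phi_vals:
  assumes u: "u < m"
  shows "Phi (u, v) (cm m (int u + 1), v + 1) = ff (int u - int v)"
    and "Phi (u, v) (cm m (int u - 1), v + 1) = ff (int u + int v)"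
    and "0 < v \<Longrightarrow> Phi (u, v) (cm m (int u + 1), v - 1) = ff (int u + int v)"
    and "0 < v \<Longrightarrow> Phi (u, v) (cm m (int u - 1), v - 1) = ff (int u - int v)"
proof -
  have ne: "cm m (int u + 1) \<noteq> cm m (int u - 1)" using cm_pm_ne[OF m3 u] .
  show "Phi (u, v) (cm m (int u + 1), v + 1) = ff (int u - int v)" unfolding Phi_def by simp
  show "Phi (u, v) (cm m (int u - 1), v + 1) = ff (int u + int v)" unfolding Phi_def using ne by simp
  assume v: "0 < v"
  have vv: "v = v - 1 + 1" "v - 1 \<noteq> v + 1" using v by auto
  have n1: "cm m (int (cm m (int u + 1)) + 1) \<noteq> u" using cm_plus2_ne[OF u m3] .
  have n2': "cm m (int (cm m (int u - 1)) + 1) = u" using cm_cm_plus[OF m0, of "int u - 1" 1] cm_int[OF u] by simp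
  have "Phi (u, v) (cm m (int u + 1), v - 1) = ff (int (cm m (int u + 1)) + int (v - 1))"
    unfolding Phi_def using vv n1 by (simp del: One_nat_def)
  also have "\<dots> = ff (int u + int v)" using ff_cm[of "int u + 1" "int (v - 1)"] v by (simp add: of_nat_diff algebra_simps)
  finally show "Phi (u, v) (cm m (int u + 1), v - 1) = ff (int u + int v)" .
  have "Phi (u, v) (cm m (int u - 1), v - 1) = ff (int (cm m (int u - 1)) - int (v - 1))"
    unfolding Phi_def using vv n2' by (simp del: One_nat_def)
  also have "\<dots> = ff (int u - int v)" using ff_cm[of "int u - 1" "- int (v - 1)"] v by (simp add: of_nat_diff algebra_simps)
  finally show "Phi (u, v) (cm m (int u - 1), v - 1) = ff (int u - int v)" .
qed


definition G :: "nat \<times> nat \<Rightarrow> nat \<times> nat \<Rightarrow> real" where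
  "G x y = cycle_w m (fst x) (fst y) * path_w n (snd x) (snd y) * Phi x y"

definition T where "T u v = ff (int u - int v) + ff (int u + int v)"
definition ca :: "nat \<Rightarrow> real" where "ca v = (if v + 1 < n then 1 else 0)"
definition cb :: "nat \<Rightarrow> real" where "cb v = (if 0 < v then 1 else 0)"

lemma Xlem:
  assumes u: "u < m" and v: "v < n" and u': "u' = cm m (int u + 1) \<or> u' = cm m (int u - 1)"
  shows "(\<Sum>v'\<in>{0..<n}. path_w n v v' * Phi (u, v) (u', v')) = (ca v + cb v) * T u v / (4 * (real n - 1))"
proof -
  have N: "real n - 1 > 0" using n2 by simp
  have "(\<Sum>v'\<in>{0..<n}. path_w n v v' * Phi (u, v) (u', v')) =
    (ca v * Phi (u, v) (u', v + 1) + cb v * Phi (u, v) (u', v - 1)) / (2 * (real n - 1))"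
    using path_sum[OF n2 v, of "\<lambda>v'. Phi (u, v) (u', v')"] unfolding ca_def cb_def by simp
  also have "\<dots> = (ca v + cb v) * T u v / (4 * (real n - 1))"
  proof -
    have top: "v + 1 = n \<Longrightarrow> ff (int u + int v) = ff (int u - int v)"
    proof -
      assume "v + 1 = n"
      then have "int v = int n - 1" by simp
      then show ?thesis using ff_perN[of "int u"] by simp
    qed
    consider "v = 0" | "v + 1 = n" "0 < v" | "0 < v" "v + 1 < n" using v by linarith
    then show ?thesis
    proof cases
      case 1
      then show ?thesis using u' Phi_vals[OF u] n2 N unfolding ca_def cb_def T_def
        by (auto simp: field_simps)
    next
      case 2
      then show ?thesis using u' Phi_vals[OF u] top N unfolding ca_def cb_def T_def
        by (auto simp: field_simps)
    next
      case 3
      then show ?thesis using u' Phi_vals[OF u] N unfolding ca_def cb_def T_def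
        by (auto simp: field_simps)
    qed
  qed
  finally show ?thesis .
qed

lemma Ylem:
  assumes u: "u < m" and v: "v < n" and v': "v' = v + 1 \<or> (0 < v \<and> v' = v - 1)"
  shows "(\<Sum>u'\<in>{0..<m}. cycle_w m u u' * Phi (u, v) (u', v')) = T u v / (2 * real m)"
  using cyc_sum[OF m3 u, of "\<lambda>u'. Phi (u, v) (u', v')"] v' Phi_vals[OF u] unfolding T_def
  by (auto simp: add.commute)

lemma rG: assumes u: "u < m" and v: "v < n"
  shows "(\<Sum>y\<in>{0..<m} \<times> {0..<n}. G (u, v) y) = (ca v + cb v) * T u v / (4 * (real n - 1) * real m)"
proof -
  have "(\<Sum>y\<in>{0..<m} \<times> {0..<n}. G (u, v) y) =
      (\<Sum>u'\<in>{0..<m}. cycle_w m u u' * (\<Sum>v'\<in>{0..<n}. path_w n v v' * Phi (u, v) (u', v')))"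
    unfolding G_def by (simp add: sum.cartesian_product split_beta sum_distrib_left mult.assoc)
  also have "\<dots> = (ca v + cb v) * T u v / (4 * (real n - 1) * real m)"
    using cyc_sum[OF m3 u, of "\<lambda>u'. \<Sum>v'\<in>{0..<n}. path_w n v v' * Phi (u, v) (u', v')"]
      Xlem[OF u v, of "cm m (int u + 1)"] Xlem[OF u v, of "cm m (int u - 1)"] m0 n2
    by (simp add: field_simps)
  finally show ?thesis .
qed


lemma hh_up: "(\<Sum>v<N. hh (c + int v)) = gg (int N + c) - gg c"
proof -
  have "(\<Sum>v<N. hh (c + int v)) = (\<Sum>v<N. gg (int v + c + 1) - gg (int v + c))"
    by (simp add: hh_def add_ac)
  then show ?thesis using tel_up[of gg c N] by simp
qed

lemma hh_down: "(\<Sum>v<N. hh (c - int v)) = gg (c + 1) - gg (c + 1 - int N)"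
proof -
  have "(\<Sum>v<N. hh (c - int v)) = (\<Sum>v<N. gg (c + 1 - int v) - gg (c + 1 - int v - 1))"
    by (simp add: hh_def algebra_simps)
  then show ?thesis using tel_down[of gg "c + 1" N] by simp
qed

lemma sumT_u: "(\<Sum>u\<in>{0..<m}. T u v) = 2 * real m"
proof -
  have "(\<Sum>u\<in>{0..<m}. T u v) = (\<Sum>u<m. 2 + (hh (- int v + int u) + hh (int v + int u)) / 2)"
    unfolding T_def ff_def by (simp add: atLeast0LessThan algebra_simps add_divide_distrib)
  also have "\<dots> = 2 * real m + ((\<Sum>u<m. hh (- int v + int u)) + (\<Sum>u<m. hh (int v + int u))) / 2"
    by (simp add: sum.distrib sum_divide_distrib[symmetric])
  also have "\<dots> = 2 * real m"
    unfolding hh_up using gg_perm[of "- int v"] gg_perm[of "int v"] by (simp add: add.commute)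
  finally show ?thesis .
qed

lemma sumT_v: "(\<Sum>v\<in>{0..<n}. (ca v + cb v) * T u v) = 4 * (real n - 1)"
proof -
  obtain N where nN: "n = Suc N" using n2 by (cases n) auto
  have s1: "(\<Sum>v<Suc N. ca v * T u v) = (\<Sum>v<N. T u v)"
    unfolding sum.lessThan_Suc ca_def using nN by simp
  have s2: "(\<Sum>v<Suc N. cb v * T u v) = (\<Sum>v<N. T u (Suc v))"
    unfolding sum.lessThan_Suc_shift cb_def by simp
  have t1: "(\<Sum>v<N. T u v) = 2 * real N + ((\<Sum>v<N. hh (int u - int v)) + (\<Sum>v<N. hh (int u + int v))) / 2"
    unfolding T_def ff_def by (simp add: sum.distrib sum_divide_distrib[symmetric] algebra_simps)
  have t2: "(\<Sum>v<N. T u (Suc v)) = 2 * real N + ((\<Sum>v<N. hh (int u - 1 - int v)) + (\<Sum>v<N. hh (int u + 1 + int v))) / 2"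
    unfolding T_def ff_def by (simp add: sum.distrib sum_divide_distrib[symmetric] algebra_simps)
  have p1: "gg (int N + int u) = gg (int u - int N)" using gg_perN[of "int u - int N"] nN by simp
  have p2: "gg (int N + (int u + 1)) = gg (int u + 1 - int N)" using gg_perN[of "int u + 1 - int N"] nN by (simp add: algebra_simps)
  have "(\<Sum>v\<in>{0..<n}. (ca v + cb v) * T u v) = (\<Sum>v<Suc N. ca v * T u v) + (\<Sum>v<Suc N. cb v * T u v)"
    unfolding nN atLeast0LessThan by (simp add: sum.distrib algebra_simps)
  also have "\<dots> = 4 * real N" unfolding s1 s2 t1 t2 hh_up hh_down using p1 p2 by (simp add: algebra_simps) (simp add: field_simps)
  also have "\<dots> = 4 * (real n - 1)" using nN by simp
  finally show ?thesis .
qed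


lemma wdegG: "u < m \<Longrightarrow> v < n \<Longrightarrow> wdeg ({0..<m} \<times> {0..<n}) G (u, v) = (ca v + cb v) * T u v / (4 * (real n - 1) * real m)"
  unfolding wdeg_def using rG by simp

lemma G_join: "weight_joining {0..<m} (cycle_w m) {0..<n} (path_w n) G"
proof -
  have N: "real n - 1 > 0" using n2 by simp
  have qv: "wdeg {0..<n} (path_w n) v = (ca v + cb v) / (2 * (real n - 1))" if "v < n" for v
    using path_deg[OF n2 that] unfolding ca_def cb_def by simp
  have c2: "(\<Sum>v\<in>{0..<n}. wdeg ({0..<m} \<times> {0..<n}) G (u, v)) = 1 / real m" if u: "u < m" for u
  proof -
    have "(\<Sum>v\<in>{0..<n}. wdeg ({0..<m} \<times> {0..<n}) G (u, v)) =
        (\<Sum>v\<in>{0..<n}. (ca v + cb v) * T u v) / (4 * (real n - 1) * real m)"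
      using wdegG[OF u] by (simp add: sum_divide_distrib)
    also have "\<dots> = 1 / real m" unfolding sumT_v using N m0 by simp
    finally show ?thesis .
  qed
  have c3: "(\<Sum>u\<in>{0..<m}. wdeg ({0..<m} \<times> {0..<n}) G (u, v)) = wdeg {0..<n} (path_w n) v" if v: "v < n" for v
  proof -
    have "(\<Sum>u\<in>{0..<m}. wdeg ({0..<m} \<times> {0..<n}) G (u, v)) =
        (ca v + cb v) * (\<Sum>u\<in>{0..<m}. T u v) / (4 * (real n - 1) * real m)"
      using wdegG[OF _ v] by (simp add: sum_divide_distrib sum_distrib_left)
    also have "\<dots> = wdeg {0..<n} (path_w n) v" unfolding sumT_u qv[OF v] using N m0 by (simp add: field_simps)
    finally show ?thesis .
  qed
  have c4: "wdeg {0..<m} (cycle_w m) u * (\<Sum>v'\<in>{0..<n}. G (u, v) (u', v')) = cycle_w m u u' * wdeg ({0..<m} \<times> {0..<n}) G (u, v)"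
    if u: "u < m" and u': "u' < m" and v: "v < n" for u u' v
  proof -
    have e: "(\<Sum>v'\<in>{0..<n}. G (u, v) (u', v')) = cycle_w m u u' * (\<Sum>v'\<in>{0..<n}. path_w n v v' * Phi (u, v) (u', v'))"
      unfolding G_def by (simp add: sum_distrib_left mult.assoc)
    show ?thesis
    proof (cases "u' = cm m (int u + 1) \<or> u' = cm m (int u - 1)")
      case True
      show ?thesis unfolding e Xlem[OF u v True] cyc_deg[OF m3 u] wdegG[OF u v] using m0 N by (simp add: field_simps)
    next
      case False
      then have "cycle_w m u u' = 0" using cycle_w_nz[OF m3 u u'] by blast
      then show ?thesis unfolding e by simp
    qed
  qed
  have c5: "wdeg {0..<n} (path_w n) v * (\<Sum>u'\<in>{0..<m}. G (u, v) (u', v')) = path_w n v v' * wdeg ({0..<m} \<times> {0..<n}) G (u, v)"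
    if v: "v < n" and v': "v' < n" and u: "u < m" for u v v'
  proof -
    have e: "(\<Sum>u'\<in>{0..<m}. G (u, v) (u', v')) = path_w n v v' * (\<Sum>u'\<in>{0..<m}. cycle_w m u u' * Phi (u, v) (u', v'))"
      unfolding G_def by (simp add: sum_distrib_left mult_ac)
    show ?thesis
    proof (cases "v' = v + 1 \<or> (0 < v \<and> v' = v - 1)")
      case True
      show ?thesis unfolding e Ylem[OF u v True] qv[OF v] wdegG[OF u v] using m0 N by (simp add: field_simps)
    next
      case False
      then have "path_w n v v' = 0" using path_w_val[OF n2 v v'] by auto
      then show ?thesis unfolding e by simp
    qed
  qed
  have nn: "G x y \<ge> 0" for x y
    unfolding G_def using Phi_nonneg[of x y] N
    by (intro mult_nonneg_nonneg) (auto simp: cycle_w_def path_w_def)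
  have sy: "G x y = G y x" for x y
    unfolding G_def using Phi_sym[of x y] by (auto simp: cycle_w_def path_w_def)
  have tot: "(\<Sum>x\<in>{0..<m} \<times> {0..<n}. \<Sum>y\<in>{0..<m} \<times> {0..<n}. G x y) = 1"
  proof -
    have "(\<Sum>x\<in>{0..<m} \<times> {0..<n}. \<Sum>y\<in>{0..<m} \<times> {0..<n}. G x y)
        = (\<Sum>u\<in>{0..<m}. \<Sum>v\<in>{0..<n}. wdeg ({0..<m} \<times> {0..<n}) G (u, v))"
      unfolding wdeg_def by (rule sum_prod_split)
    also have "\<dots> = (\<Sum>u\<in>{0..<m}. 1 / real m)" using c2 by simp
    also have "\<dots> = 1" using m0 by simp
    finally show ?thesis .
  qed
  show ?thesis
    unfolding weight_joining_def weight_fun_def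
    using nn sy tot c2 cyc_deg[OF m3] c3 c4 c5 by auto
qed

lemma G_not_prod: "G (0, 0) (1, 1) \<noteq> cycle_w m 0 1 * path_w n 0 1"
proof -
  have c1: "cm m (int 0 + 1) = 1" using cm_plus1[of 0 m] m3 by simp
  have pos: "cycle_w m 0 1 * path_w n 0 1 > 0" using m3 n2 by (auto simp: cycle_w_def path_w_def)
  have "Phi (0, 0) (1, 1) = 1 / 2" using Phi_vals(1)[of 0 0] m0 c1 ff0 by simp
  then have "G (0, 0) (1, 1) = cycle_w m 0 1 * path_w n 0 1 * (1 / 2)" unfolding G_def by simp
  then show ?thesis using pos by linarith
qed

lemma not_sd: "\<not> strongly_disjoint {0..<m} (cycle_w m) {0..<n} (path_w n)"
proof
  assume "strongly_disjoint {0..<m} (cycle_w m) {0..<n} (path_w n)"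
  then have h: "\<forall>x\<in>{0..<m} \<times> {0..<n}. \<forall>y\<in>{0..<m} \<times> {0..<n}. G x y = cycle_w m (fst x) (fst y) * path_w n (snd x) (snd y)"
    unfolding strongly_disjoint_def using G_join by blast
  have "(0::nat, 0::nat) \<in> {0..<m} \<times> {0..<n}" "(1::nat, 1::nat) \<in> {0..<m} \<times> {0..<n}" using m3 n2 by auto
  then have "G (0, 0) (1, 1) = cycle_w m 0 1 * path_w n 0 1" using h by fastforce
  then show False using G_not_prod by simp
qed

end

theorem proposition3p6:
  fixes m n :: nat
  assumes "m \<ge> 3" and "n \<ge> 2"
  shows "strongly_disjoint {0..<m} (cycle_w m) {0..<n} (path_w n)
           \<longleftrightarrow> odd m \<and> gcd m (n - 1) = 1"
proof -
  have cop: "coprime m (2 * (n - 1)) \<longleftrightarrow> odd m \<and> gcd m (n - 1) = 1"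
    by (simp add: coprime_mult_right_iff) (metis One_nat_def coprime_iff_gcd_eq_1)
  show ?thesis
  proof
    assume sd: "strongly_disjoint {0..<m} (cycle_w m) {0..<n} (path_w n)"
    show "odd m \<and> gcd m (n - 1) = 1"
    proof (rule ccontr)
      assume "\<not> (odd m \<and> gcd m (n - 1) = 1)"
      then have nc: "\<not> coprime m (2 * (n - 1))" using cop by simp
      define d where "d = gcd m (2 * (n - 1))"
      have "d \<noteq> 1" using nc unfolding d_def by (simp add: coprime_iff_gcd_eq_1)
      moreover have "d \<noteq> 0" unfolding d_def using assms by simp
      ultimately have "d \<ge> 2" by linarith
      then interpret C m n d using assms unfolding d_def by unfold_locales auto
      show False using not_sd sd by simp
    qed
  next
    assume "odd m \<and> gcd m (n - 1) = 1"
    then have c: "coprime m (2 * (n - 1))" using cop by simp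
    show "strongly_disjoint {0..<m} (cycle_w m) {0..<n} (path_w n)"
      unfolding strongly_disjoint_def
    proof (intro allI impI)
      fix \<gamma> assume "weight_joining {0..<m} (cycle_w m) {0..<n} (path_w n) \<gamma>"
      then interpret J m n \<gamma> using assms by unfold_locales auto
      show "\<forall>x\<in>{0..<m} \<times> {0..<n}. \<forall>y\<in>{0..<m} \<times> {0..<n}. \<gamma> x y = cycle_w m (fst x) (fst y) * path_w n (snd x) (snd y)"
        using uniq[OF c] .
    qed
  qed
qed

end
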